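(* Fix an integer $k\ge 2$ and a prime $p$, and let $g_{pk}$ denote the common genus of all januarials constructed from the Hecke group $\Delta_k$ acting on $PL(F_p)$. Then for every such januarial: 1. if it is of simple type $(h,g_1,g_2)$, then $g_1+g_2+h=g_{pk}+1$; 2. if it is of general type $((h_1,g_1),(h_2,g_2))$, then $g_1+g_2+(h_1+h_2+\alpha)/2=g_{pk}+1$, where $\alpha=v-e$ with $v$ and $e$ the numbers of vertices and edges of its common graph $\Upsilon$.
   Context: Let $\Delta(2,k,\ell)=\langle x,y:x^2=y^k=(xy)^\ell=1\rangle$ and let $\Delta_k=\Delta(2,k,\infty)$. For an action on a finite set $S$, the coset graph has: - vertex set $S$; - an undirected $x$-edge for each pair of points transposed by $x$; - a directed $y$-edge $u\to uy$. It is $2$-cell embedded in a closed orientable surface via the rotation system (incoming $y$-edge, outgoing $y$-edge, $x$-edge) at each vertex. The faces are $y$-faces (boundary $y^n$) and $xy$-faces (boundary $(xy)^m$); this is the coset diagram. A januarial is a coset diagram in which $\langle xy\rangle$ has exactly two orbits, each of size $|S|/2$. Let $S_1,S_2$ be the closures of its two $xy$-faces. Collapsing each $y$-face to a point gives the companion diagram $J'$, with images $S_i'$ of $S_i$. Let $R_i$ be a small closed neighbourhood of $S_i'$ in $J'$, let $g_i$ be its genus and $h_i$ its number of boundary components. The common graph is $\Upsilon=S_1'\cap S_2'$. The januarial is of simple type $(h,g_1,g_2)$ if $\Upsilon$ is a union of $h$ disjoint simple circuits (then $h_1=h_2=h$). Otherwise it is of general type $((h_1,g_1),(h_2,g_2))$.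 A januarial constructed from $\Delta_k$ acting on $PL(F_p)$ is defined as follows. Let $\ell=(p+1)/2$. Let $x,y$ act on $PL(F_p)$ by $$X:z\mapsto \frac{az+cd}{cz-a},\qquad Y:z\mapsto \frac{ez+fd}{fz+b-e},$$ with integers $a,\dots,f$ satisfying - $\nabla=-(a^2+dc^2)\neq0$, - $1+df^2+e^2-eb=0$, - $\theta\nabla=r^2$, where $r=a(2e-b)+2dcf$. Here $\theta$ is a root of $f_\ell=\sum_{j\ge0}(-1)^j\binom{\ell-1-j}{j}\theta^{(\ell-1)/2-j}$ ($\ell$ odd), respectively $f_\ell=\sum_{j\ge0}(-1)^j\binom{\ell-1-j}{j}\theta^{\ell/2-1-2j}$ ($\ell$ even), that is not a root of $f_{\ell/s}$ for any divisor $s>1$ of $\ell$. These choices make $XY$ have exactly two orbits of size $\ell$. All januarials so constructed, for fixed $p$ and $k$, have the same genus $g_{pk}$. *)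

theory Defs
  imports "HOL-Number_Theory.Number_Theory"
begin

definition orb :: "('a \<Rightarrow> 'a) \<Rightarrow> 'a \<Rightarrow> 'a set" where
  "orb g u = {(g ^^ n) u | n. True}"

text \<open>The point u(xy) = (ux)y.\<close>
definition xyact :: "('a \<Rightarrow> 'a) \<Rightarrow> ('a \<Rightarrow> 'a) \<Rightarrow> 'a \<Rightarrow> 'a" where
  "xyact X Y u = Y (X u)"

definition y_orbits :: "'a set \<Rightarrow> ('a \<Rightarrow> 'a) \<Rightarrow> 'a set set" where
  "y_orbits S Y = orb Y ` S"

definition xy_orbits :: "'a set \<Rightarrow> ('a \<Rightarrow> 'a) \<Rightarrow> ('a \<Rightarrow> 'a) \<Rightarrow> 'a set set" where
  "xy_orbits S X Y = orb (xyact X Y) ` S"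

text \<open>A coset diagram is connected (it is 2-cell embedded in a closed, hence connected,
  surface): the action of x and y is transitive.\<close>
definition transitive_xy :: "'a set \<Rightarrow> ('a \<Rightarrow> 'a) \<Rightarrow> ('a \<Rightarrow> 'a) \<Rightarrow> bool" where
  "transitive_xy S X Y \<longleftrightarrow>
     (\<forall>u\<in>S. \<forall>v\<in>S. (u, v) \<in> ({(w, X w) | w. w \<in> S} \<union> {(w, Y w) | w. w \<in> S})\<^sup>*)"

definition januarial :: "'a set \<Rightarrow> ('a \<Rightarrow> 'a) \<Rightarrow> ('a \<Rightarrow> 'a) \<Rightarrow> bool" where
  "januarial S X Y \<longleftrightarrow>
     finite S \<and> bij_betw X S S \<and> bij_betw Y S S \<and> (\<forall>u\<in>S. X (X u) = u) \<and>
     transitive_xy S X Y \<and>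
     card (xy_orbits S X Y) = 2 \<and> (\<forall>F\<in>xy_orbits S X Y. 2 * card F = card S)"

text \<open>Genus of the coset diagram, via Euler's formula V - E + F = 2 - 2g:
  vertices = points of S, edges = one directed y-edge per point plus one x-edge per
  pair of points transposed by x, faces = y-faces (orbits of y) and xy-faces
  (orbits of xy).\<close>
definition x_edges :: "'a set \<Rightarrow> ('a \<Rightarrow> 'a) \<Rightarrow> 'a set set" where
  "x_edges S X = {{u, X u} | u. u \<in> S \<and> X u \<noteq> u}"

definition diagram_genus :: "'a set \<Rightarrow> ('a \<Rightarrow> 'a) \<Rightarrow> ('a \<Rightarrow> 'a) \<Rightarrow> real" where
  "diagram_genus S X Y =
     (2 - (real (card S) - (real (card S) + real (card (x_edges S X)))
           + (real (card (y_orbits S Y)) + real (card (xy_orbits S X Y))))) / 2"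

text \<open>In J' the vertices are the y-orbits (collapsed y-faces), the edges are the x-edges,
  the rotation at a collapsed vertex is given by y, and the faces are the two xy-faces.
  For an xy-face F, its closure S' consists of the face, the vertices (y-orbits) meeting F
  and the x-edges having F on at least one side (edge {u, ux} has face(u) on one side
  and face(ux) on the other).\<close>
definition cl_vertices :: "'a set \<Rightarrow> ('a \<Rightarrow> 'a) \<Rightarrow> 'a set \<Rightarrow> 'a set set" where
  "cl_vertices S Y F = {orb Y u | u. u \<in> S \<and> u \<in> F}"

definition cl_darts :: "'a set \<Rightarrow> ('a \<Rightarrow> 'a) \<Rightarrow> 'a set \<Rightarrow> 'a set" where
  "cl_darts S X F = {u \<in> S. X u \<noteq> u \<and> (u \<in> F \<or> X u \<in> F)}"

definition cl_edges :: "'a set \<Rightarrow> ('a \<Rightarrow> 'a) \<Rightarrow> 'a set \<Rightarrow> 'a set set" where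
  "cl_edges S X F = {{u, X u} | u. u \<in> cl_darts S X F}"

text \<open>Euler characteristic of R (which deformation retracts to S'):
  vertices - edges + 1 (the open disc of the face).\<close>
definition nbhd_euler :: "'a set \<Rightarrow> ('a \<Rightarrow> 'a) \<Rightarrow> ('a \<Rightarrow> 'a) \<Rightarrow> 'a set \<Rightarrow> int" where
  "nbhd_euler S X Y F =
     int (card (cl_vertices S Y F)) - int (card (cl_edges S X F)) + 1"

text \<open>Rotation of the ribbon subgraph (boundary graph of the face) induced by the rotation y:
  the next dart around the vertex that belongs to the subgraph.\<close>
definition restr_rot :: "('a \<Rightarrow> 'a) \<Rightarrow> 'a set \<Rightarrow> 'a \<Rightarrow> 'a" where
  "restr_rot Y D u = (Y ^^ (LEAST n. 0 < n \<and> (Y ^^ n) u \<in> D)) u"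

text \<open>The small closed neighbourhood R of S' is the thickening of the boundary graph of F
  (a ribbon graph) with the disc F glued onto the boundary curve tracing F.  Hence its
  boundary components are the faces of the ribbon subgraph other than F itself.\<close>
definition nbhd_boundary :: "'a set \<Rightarrow> ('a \<Rightarrow> 'a) \<Rightarrow> ('a \<Rightarrow> 'a) \<Rightarrow> 'a set \<Rightarrow> int" where
  "nbhd_boundary S X Y F =
     int (card (orb (\<lambda>u. restr_rot Y (cl_darts S X F) (X u)) ` cl_darts S X F)) - 1"

text \<open>Genus of R from \<open>\<chi>(R) = 2 - 2g - h\<close>.\<close>
definition nbhd_genus :: "'a set \<Rightarrow> ('a \<Rightarrow> 'a) \<Rightarrow> ('a \<Rightarrow> 'a) \<Rightarrow> 'a set \<Rightarrow> real" where
  "nbhd_genus S X Y F =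
     (2 - real_of_int (nbhd_boundary S X Y F) - real_of_int (nbhd_euler S X Y F)) / 2"

definition common_vertices :: "'a set \<Rightarrow> ('a \<Rightarrow> 'a) \<Rightarrow> 'a set \<Rightarrow> 'a set \<Rightarrow> 'a set set" where
  "common_vertices S Y O1 O2 = {C \<in> y_orbits S Y. C \<inter> O1 \<noteq> {} \<and> C \<inter> O2 \<noteq> {}}"

text \<open>Edges with O1 on one side and O2 on the other (represented by their end in O1).\<close>
definition common_darts :: "'a set \<Rightarrow> ('a \<Rightarrow> 'a) \<Rightarrow> 'a set \<Rightarrow> 'a set \<Rightarrow> 'a set" where
  "common_darts S X O1 O2 = {u \<in> S. X u \<noteq> u \<and> u \<in> O1 \<and> X u \<in> O2}"

definition common_edges :: "'a set \<Rightarrow> ('a \<Rightarrow> 'a) \<Rightarrow> 'a set \<Rightarrow> 'a set \<Rightarrow> 'a set set" where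
  "common_edges S X O1 O2 = {{u, X u} | u. u \<in> common_darts S X O1 O2}"

definition common_alpha :: "'a set \<Rightarrow> ('a \<Rightarrow> 'a) \<Rightarrow> ('a \<Rightarrow> 'a) \<Rightarrow> 'a set \<Rightarrow> 'a set \<Rightarrow> int" where
  "common_alpha S X Y O1 O2 =
     int (card (common_vertices S Y O1 O2)) - int (card (common_edges S X O1 O2))"

text \<open>Degree of a vertex (y-orbit) in \<open>\<Upsilon>\<close>: number of edge-ends of common edges at it
  (a loop contributes 2).\<close>
definition common_degree :: "'a set \<Rightarrow> ('a \<Rightarrow> 'a) \<Rightarrow> 'a set \<Rightarrow> 'a set \<Rightarrow> 'a set \<Rightarrow> nat" where
  "common_degree S X O1 O2 C =
     card {u \<in> C. u \<in> common_darts S X O1 O2 \<or> u \<in> common_darts S X O2 O1}"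

definition common_adj :: "'a set \<Rightarrow> ('a \<Rightarrow> 'a) \<Rightarrow> ('a \<Rightarrow> 'a) \<Rightarrow> 'a set \<Rightarrow> 'a set \<Rightarrow> ('a set \<times> 'a set) set" where
  "common_adj S X Y O1 O2 = {(orb Y u, orb Y (X u)) | u. u \<in> common_darts S X O1 O2}"

definition common_components :: "'a set \<Rightarrow> ('a \<Rightarrow> 'a) \<Rightarrow> ('a \<Rightarrow> 'a) \<Rightarrow> 'a set \<Rightarrow> 'a set \<Rightarrow> nat" where
  "common_components S X Y O1 O2 =
     card ((\<lambda>C. {C' \<in> common_vertices S Y O1 O2.
                  (C, C') \<in> (common_adj S X Y O1 O2 \<union> (common_adj S X Y O1 O2)\<inverse>)\<^sup>*})
           ` common_vertices S Y O1 O2)"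

text \<open>Simple type: \<open>\<Upsilon>\<close> is a disjoint union of simple circuits, i.e. every vertex of \<open>\<Upsilon>\<close>
  has degree exactly 2 in \<open>\<Upsilon>\<close>; the number h of circuits is then the number of components.\<close>
definition simple_type :: "'a set \<Rightarrow> ('a \<Rightarrow> 'a) \<Rightarrow> ('a \<Rightarrow> 'a) \<Rightarrow> 'a set \<Rightarrow> 'a set \<Rightarrow> bool" where
  "simple_type S X Y O1 O2 \<longleftrightarrow>
     (\<forall>C \<in> common_vertices S Y O1 O2. common_degree S X O1 O2 C = 2)"

text \<open>PL(F_p) = F_p \<union> {\<infinity>}, represented as {0..p} with p standing for \<infinity>.\<close>
definition PL :: "nat \<Rightarrow> nat set" where
  "PL p = {0..p}"

definition inv_modp :: "nat \<Rightarrow> int \<Rightarrow> int" where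
  "inv_modp p x = (x ^ (p - 2)) mod int p"

definition mobius :: "nat \<Rightarrow> int \<Rightarrow> int \<Rightarrow> int \<Rightarrow> int \<Rightarrow> nat \<Rightarrow> nat" where
  "mobius p \<alpha> \<beta> \<gamma> \<delta> z =
     (if z = p then
        (if \<gamma> mod int p = 0 then p else nat ((\<alpha> * inv_modp p \<gamma>) mod int p))
      else
        (let den = (\<gamma> * int z + \<delta>) mod int p in
         if den = 0 then p else nat (((\<alpha> * int z + \<beta>) * inv_modp p den) mod int p)))"

definition Xmap :: "nat \<Rightarrow> int \<Rightarrow> int \<Rightarrow> int \<Rightarrow> nat \<Rightarrow> nat" where
  "Xmap p a c d = mobius p a (c * d) c (- a)"

definition Ymap :: "nat \<Rightarrow> int \<Rightarrow> int \<Rightarrow> int \<Rightarrow> int \<Rightarrow> nat \<Rightarrow> nat" where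
  "Ymap p b d e f = mobius p e (f * d) f (b - e)"

definition fpoly :: "nat \<Rightarrow> int \<Rightarrow> int" where
  "fpoly l \<theta> =
     (if odd l then (\<Sum>j = 0..(l - 1) div 2. (-1) ^ j * int ((l - 1 - j) choose j) * \<theta> ^ ((l - 1) div 2 - j))
      else (\<Sum>j = 0..l div 2 - 1. (-1) ^ j * int ((l - 1 - j) choose j) * \<theta> ^ (l div 2 - 1 - j)))"

end

theory Submission
  imports Defs
begin

lemma orb_funpow: "(f ^^ n) u \<in> orb f u"
  unfolding orb_def by blast

lemma orb_self: "u \<in> orb f u"
  using orb_funpow[of 0 f u] by simp

lemma orb_step: "v \<in> orb f u \<Longrightarrow> f v \<in> orb f u"
proof -
  assume "v \<in> orb f u"
  then obtain n where "v = (f ^^ n) u" unfolding orb_def by blast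
  then have "f v = (f ^^ Suc n) u" by simp
  then show ?thesis using orb_funpow by metis
qed

lemma orb_induct:
  assumes "v \<in> orb f u" "P u" "\<And>w. P w \<Longrightarrow> P (f w)"
  shows "P v"
proof -
  obtain n where "v = (f ^^ n) u" using assms(1) unfolding orb_def by blast
  moreover have "P ((f ^^ n) u)" by (induction n) (use assms in auto)
  ultimately show ?thesis by simp
qed

lemma orb_subset: "(\<And>x. x \<in> S \<Longrightarrow> f x \<in> S) \<Longrightarrow> u \<in> S \<Longrightarrow> orb f u \<subseteq> S"
  using orb_induct[of _ f u "\<lambda>x. x \<in> S"] by blast

lemma orb_sub_of_mem: "v \<in> orb f u \<Longrightarrow> orb f v \<subseteq> orb f u"
proof
  fix w assume "v \<in> orb f u" "w \<in> orb f v"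
  then obtain i m where "v = (f ^^ i) u" "w = (f ^^ m) v" unfolding orb_def by blast
  then have "w = (f ^^ (m + i)) u" by (simp add: funpow_add)
  then show "w \<in> orb f u" using orb_funpow by metis
qed

lemma orb_eq_periodic:
  assumes "0 < n" "(f ^^ n) u = u" "v \<in> orb f u"
  shows "orb f v = orb f u"
proof
  show "orb f v \<subseteq> orb f u" by (rule orb_sub_of_mem[OF assms(3)])
  obtain i where i: "v = (f ^^ i) u" using assms(3) unfolding orb_def by blast
  have per: "(f ^^ (n * j)) u = u" for j
    by (induction j) (simp_all add: funpow_add assms(2))
  have "n * (i + 1) \<ge> 1 * (i + 1)" using assms(1) by (intro mult_le_mono1) simp
  define m where "m = n * (i + 1) - i"
  have m: "n * (i + 1) = m + i" unfolding m_def using \<open>n * (i + 1) \<ge> 1 * (i + 1)\<close> by simp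
  have "(f ^^ m) v = (f ^^ (m + i)) u" using i by (simp add: funpow_add)
  also have "\<dots> = u" using per[of "i+1"] m by metis
  finally have "(f ^^ m) v = u" .
  then have "u \<in> orb f v" using orb_funpow by metis
  then show "orb f u \<subseteq> orb f v" by (rule orb_sub_of_mem)
qed

lemma periodic_of_inj:
  assumes fin: "finite S" and fS: "\<And>x. x \<in> S \<Longrightarrow> f x \<in> S" and inj: "inj_on f S" and u: "u \<in> S"
  shows "\<exists>n>0. (f ^^ n) u = u"
proof -
  have inS: "(f ^^ n) u \<in> S" for n by (induction n) (use u fS in auto)
  have "range (\<lambda>n. (f ^^ n) u) \<subseteq> S" using inS by auto
  then have "finite (range (\<lambda>n. (f ^^ n) u))" using fin finite_subset by blast
  then have "\<not> inj (\<lambda>n. (f ^^ n) u)" using finite_imageD infinite_UNIV_nat by blast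
  then obtain i j where ij: "i \<noteq> j" "(f ^^ i) u = (f ^^ j) u" unfolding inj_on_def by blast
  obtain a d where ad: "0 < d" "(f ^^ (a + d)) u = (f ^^ a) u"
  proof (cases "i < j")
    case True then show ?thesis using that[of "j - i" i] ij by simp
  next
    case False then show ?thesis using that[of "i - j" j] ij by simp
  qed
  have "(f ^^ (a + d)) u = (f ^^ a) u \<Longrightarrow> (f ^^ d) u = u" for a
  proof (induction a)
    case 0 then show ?case by simp
  next
    case (Suc a)
    have "f ((f ^^ (a + d)) u) = f ((f ^^ a) u)" using Suc.prems by simp
    then have "(f ^^ (a + d)) u = (f ^^ a) u" using inj inS unfolding inj_on_def by blast
    then show ?case by (rule Suc.IH)
  qed
  then show ?thesis using ad by blast
qed

lemma restr_rot_eq: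
  assumes "0 < m" "(Y ^^ m) w \<in> D" "\<And>j. 0 < j \<Longrightarrow> j < m \<Longrightarrow> (Y ^^ j) w \<notin> D"
  shows "restr_rot Y D w = (Y ^^ m) w"
proof -
  have "(LEAST n. 0 < n \<and> (Y ^^ n) w \<in> D) = m"
    by (rule Least_equality) (use assms not_less in blast)+
  thus ?thesis unfolding restr_rot_def by simp
qed

lemma least_pos:
  fixes n :: nat
  assumes "0 < n" "P n"
  shows "\<exists>m. 0 < m \<and> P m \<and> (\<forall>j. 0 < j \<longrightarrow> j < m \<longrightarrow> \<not> P j)"
proof -
  define m where "m = (LEAST m. 0 < m \<and> P m)"
  have "0 < m \<and> P m" unfolding m_def by (rule LeastI[of _ n]) (use assms in auto)
  moreover have "\<forall>j. 0 < j \<longrightarrow> j < m \<longrightarrow> \<not> P j" unfolding m_def using not_less_Least by blast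
  ultimately show ?thesis by blast
qed

locale jset =
  fixes S :: "'a set" and X Y :: "'a \<Rightarrow> 'a" and k :: nat and O1 O2 :: "'a set"
  assumes finS: "finite S"
    and XS: "\<And>u. u \<in> S \<Longrightarrow> X u \<in> S"
    and XX: "\<And>u. u \<in> S \<Longrightarrow> X (X u) = u"
    and YS: "\<And>u. u \<in> S \<Longrightarrow> Y u \<in> S"
    and injY: "inj_on Y S"
    and kpos: "0 < k"
    and Yk: "\<And>u. u \<in> S \<Longrightarrow> (Y ^^ k) u = u"
    and O1: "O1 \<in> xy_orbits S X Y" and O2: "O2 \<in> xy_orbits S X Y" and O12: "O1 \<noteq> O2"
    and card2: "card (xy_orbits S X Y) = 2"
    and transxy: "transitive_xy S X Y"

context jset begin

lemma swap: "jset S X Y k O2 O1"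
  unfolding jset_def using finS XS XX YS injY kpos Yk O1 O2 card2 transxy O12 by blast

abbreviation "g \<equiv> xyact X Y"

lemma gS: "u \<in> S \<Longrightarrow> g u \<in> S"
  unfolding xyact_def using XS YS by blast

lemma g_inj: "inj_on g S"
proof (rule inj_onI)
  fix x y assume xy: "x \<in> S" "y \<in> S" "g x = g y"
  then have "Y (X x) = Y (X y)" unfolding xyact_def by simp
  then have "X x = X y" using injY XS xy(1,2) unfolding inj_on_def by blast
  then show "x = y" using XX xy(1,2) by metis
qed

lemma g_per: "u \<in> S \<Longrightarrow> \<exists>n>0. (g ^^ n) u = u"
  using periodic_of_inj[OF finS gS g_inj] by blast

lemma O1S: "O1 \<subseteq> S"
proof -
  obtain u where "u \<in> S" "O1 = orb g u" using O1 unfolding xy_orbits_def by blast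
  then show ?thesis using orb_subset[of S g u] gS by blast
qed

lemma O1_orb: "v \<in> O1 \<Longrightarrow> orb g v = O1"
proof -
  obtain u where u: "u \<in> S" "O1 = orb g u" using O1 unfolding xy_orbits_def by blast
  assume "v \<in> O1"
  then show ?thesis using g_per[OF u(1)] orb_eq_periodic u by metis
qed

lemma gO1: "v \<in> O1 \<Longrightarrow> g v \<in> O1"
  using O1_orb orb_step orb_self by metis

lemma gpowO1: "v \<in> O1 \<Longrightarrow> (g ^^ n) v \<in> O1"
  by (induction n) (auto simp: gO1)

lemma O1_nonempty: "O1 \<noteq> {}"
proof -
  obtain u where u: "u \<in> S" "O1 = orb g u" using O1 unfolding xy_orbits_def by blast
  then show ?thesis using orb_self[of u g] by auto
qed

lemma disj: "O1 \<inter> O2 = {}"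
proof (rule ccontr)
  assume "O1 \<inter> O2 \<noteq> {}"
  then obtain v where "v \<in> O1" "v \<in> O2" by blast
  then have "orb g v = O1" "orb g v = O2" using O1_orb jset.O1_orb[OF swap] by auto
  then show False using O12 by simp
qed

lemma cover: "u \<in> S \<Longrightarrow> u \<in> O1 \<or> u \<in> O2"
proof -
  assume u: "u \<in> S"
  have "xy_orbits S X Y = {O1, O2}"
  proof -
    obtain A B where AB: "xy_orbits S X Y = {A, B}" using card2 unfolding card_2_iff by blast
    have "O1 \<in> {A, B}" "O2 \<in> {A, B}" using O1 O2 AB by simp_all
    then have "{A, B} = {O1, O2}" using O12 by blast
    then show ?thesis using AB by simp
  qed
  moreover have "orb g u \<in> xy_orbits S X Y" using u unfolding xy_orbits_def by blast
  ultimately have "orb g u = O1 \<or> orb g u = O2" by simp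
  then show ?thesis using orb_self[of u g] by auto
qed

lemma SU: "S = O1 \<union> O2"
proof
  show "S \<subseteq> O1 \<union> O2" using cover by blast
  show "O1 \<union> O2 \<subseteq> S" using O1S jset.O1S[OF swap] by blast
qed

lemma Yorb_S: "u \<in> S \<Longrightarrow> orb Y u \<subseteq> S"
  using orb_subset[of S Y u] YS by blast

lemma Yorb_eq: "v \<in> orb Y u \<Longrightarrow> u \<in> S \<Longrightarrow> orb Y v = orb Y u"
  using orb_eq_periodic[OF kpos Yk] by blast

lemma YX_face: "u \<in> S \<Longrightarrow> Y (X u) \<in> O1 \<longleftrightarrow> u \<in> O1"
proof -
  assume u: "u \<in> S"
  have "Y (X u) = g u" unfolding xyact_def by simp
  moreover have "X u \<in> S" using XS u by simp
  ultimately show ?thesis using gO1[of u] jset.gO1[OF swap, of u] disj u cover[of u] cover[of "Y (X u)"] YS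
    by auto
qed

lemma Y_face: "u \<in> S \<Longrightarrow> Y u \<in> O1 \<longleftrightarrow> X u \<in> O1"
  using YX_face[of "X u"] XX XS by simp

end

context jset begin

abbreviation "D1 \<equiv> cl_darts S X O1"
abbreviation "R1 \<equiv> (\<lambda>u. restr_rot Y D1 (X u))"

lemma D1_S: "D1 \<subseteq> S"
  unfolding cl_darts_def by blast

lemma D1_X: "u \<in> D1 \<Longrightarrow> X u \<in> D1"
  unfolding cl_darts_def using XS XX by force

lemma D1_O1: "u \<in> O1 \<Longrightarrow> u \<in> D1 \<longleftrightarrow> X u \<noteq> u"
  unfolding cl_darts_def using O1S by blast

lemma D1_O2: "D1 \<inter> O2 = common_darts S X O2 O1"
  unfolding cl_darts_def common_darts_def using disj by blast

lemma R1_A: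
  assumes u: "u \<in> D1 \<inter> O1" and m: "0 < m" "(g ^^ m) u \<in> D1"
    and btw: "\<And>j. 0 < j \<Longrightarrow> j < m \<Longrightarrow> (g ^^ j) u \<notin> D1"
  shows "R1 u = (g ^^ m) u"
proof -
  have fx: "X ((g ^^ j) u) = (g ^^ j) u" if "0 < j" "j < m" for j
    using btw[OF that] D1_O1 gpowO1 u by blast
  have eq: "(Y ^^ j) (X u) = (g ^^ j) u" if "0 < j" "j \<le> m" for j
    using that
  proof (induction j)
    case 0 then show ?case by simp
  next
    case (Suc j)
    show ?case
    proof (cases "j = 0")
      case True then show ?thesis by (simp add: xyact_def)
    next
      case False
      then have "(Y ^^ j) (X u) = (g ^^ j) u" using Suc by simp
      then have "(Y ^^ Suc j) (X u) = Y ((g ^^ j) u)" by simp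
      also have "\<dots> = Y (X ((g ^^ j) u))" using fx[of j] False Suc.prems by simp
      also have "\<dots> = (g ^^ Suc j) u" by (simp add: xyact_def)
      finally show ?thesis .
    qed
  qed
  show ?thesis
    by (rule trans[OF restr_rot_eq[of m]]) (use m eq btw in auto)
qed

lemma R1_A_ex:
  assumes u: "u \<in> D1 \<inter> O1"
  shows "R1 u \<in> D1 \<inter> O1"
proof -
  obtain n where n: "0 < n" "(g ^^ n) u = u" using g_per u O1S by blast
  then have "(g ^^ n) u \<in> D1" using u by simp
  then obtain m where m: "0 < m" "(g ^^ m) u \<in> D1" "\<And>j. 0 < j \<Longrightarrow> j < m \<Longrightarrow> (g ^^ j) u \<notin> D1"
    using least_pos[of n "\<lambda>m. (g ^^ m) u \<in> D1"] n by blast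
  have "R1 u = (g ^^ m) u" by (rule R1_A[OF u m])
  then show ?thesis using m(2) gpowO1 u by auto
qed

lemma A_orb:
  assumes u: "u \<in> D1 \<inter> O1"
  shows "orb R1 u = D1 \<inter> O1"
proof
  show "orb R1 u \<subseteq> D1 \<inter> O1"
  proof
    fix v assume "v \<in> orb R1 u"
    then show "v \<in> D1 \<inter> O1" by (rule orb_induct) (use u R1_A_ex in auto)
  qed
  have reach: "(g ^^ n) u \<in> D1 \<Longrightarrow> (g ^^ n) u \<in> orb R1 u" for n
  proof (induction n rule: less_induct)
    case (less n)
    show ?case
    proof (cases "n = 0")
      case True then show ?thesis using orb_self by simp
    next
      case False
      define n' where "n' = Max {i. i < n \<and> (g ^^ i) u \<in> D1}"
      have fin: "finite {i. i < n \<and> (g ^^ i) u \<in> D1}" by simp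
      have ne: "0 \<in> {i. i < n \<and> (g ^^ i) u \<in> D1}" using False u by simp
      have n'1: "n' < n" "(g ^^ n') u \<in> D1"
        using Max_in[OF fin] ne unfolding n'_def by blast+
      have n'2: "i < n \<Longrightarrow> (g ^^ i) u \<in> D1 \<Longrightarrow> i \<le> n'" for i
        unfolding n'_def using Max_ge[OF fin] by blast
      have IH: "(g ^^ n') u \<in> orb R1 u" using less.IH n'1 by blast
      have v: "(g ^^ n') u \<in> D1 \<inter> O1" using n'1 gpowO1 u by blast
      have cmp: "(g ^^ (n - n')) ((g ^^ n') u) = (g ^^ n) u"
      proof -
        have "(g ^^ (n - n')) ((g ^^ n') u) = (g ^^ (n - n' + n')) u" by (simp add: funpow_add)
        then show ?thesis using n'1 by simp
      qed
      have "R1 ((g ^^ n') u) = (g ^^ (n - n')) ((g ^^ n') u)"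
      proof (rule R1_A[OF v])
        show "0 < n - n'" using n'1 by simp
        show "(g ^^ (n - n')) ((g ^^ n') u) \<in> D1"
          using less.prems cmp by simp
        fix j assume j: "0 < j" "j < n - n'"
        have "(g ^^ j) ((g ^^ n') u) = (g ^^ (j + n')) u" by (simp add: funpow_add)
        moreover have "\<not> (j + n' \<le> n')" using j by simp
        moreover have "j + n' < n" using j by arith
        ultimately show "(g ^^ j) ((g ^^ n') u) \<notin> D1" using n'2[of "j + n'"] by auto
      qed
      also have "\<dots> = (g ^^ n) u" using cmp by simp
      finally show ?thesis using IH orb_step by metis
    qed
  qed
  show "D1 \<inter> O1 \<subseteq> orb R1 u"
  proof
    fix v assume v: "v \<in> D1 \<inter> O1"
    then have "v \<in> orb g u" using O1_orb u by blast
    then obtain n where "v = (g ^^ n) u" unfolding orb_def by blast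
    then show "v \<in> orb R1 u" using reach v by blast
  qed
qed

lemma R1_B:
  assumes u: "u \<in> D1 \<inter> O2"
  shows "R1 u \<in> D1 \<inter> O2 \<and> R1 u \<in> orb Y (X u)"
proof -
  have uS: "u \<in> S" using u D1_S by blast
  have Xu: "X u \<in> D1" "X u \<in> S" "X u \<in> O1"
    using D1_X u XS uS D1_O2 unfolding common_darts_def by auto
  have "(Y ^^ k) (X u) \<in> D1" using Yk Xu by simp
  then obtain m where m: "0 < m" "(Y ^^ m) (X u) \<in> D1" "\<And>j. 0 < j \<Longrightarrow> j < m \<Longrightarrow> (Y ^^ j) (X u) \<notin> D1"
    using least_pos[of k "\<lambda>m. (Y ^^ m) (X u) \<in> D1"] kpos by blast
  have R: "R1 u = (Y ^^ m) (X u)" by (rule restr_rot_eq) (use m in auto)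
  have YS': "(Y ^^ j) (X u) \<in> S" for j by (induction j) (use Xu YS in auto)
  have inO2: "0 < j \<Longrightarrow> j \<le> m \<Longrightarrow> (Y ^^ j) (X u) \<in> O2" for j
  proof (induction j)
    case 0 then show ?case by simp
  next
    case (Suc j)
    show ?case
    proof (cases "j = 0")
      case True
      have "Y (X u) = g u" by (simp add: xyact_def)
      then show ?thesis using True u jset.gO1[OF swap] by auto
    next
      case False
      let ?z = "(Y ^^ j) (X u)"
      have z: "?z \<in> O2" "?z \<notin> D1" "?z \<in> S" using Suc False m(3)[of j] YS' by auto
      have "X ?z \<in> O2"
      proof (cases "X ?z = ?z")
        case True then show ?thesis using z by simp
      next
        case False
        then have "X ?z \<notin> O1" using z unfolding cl_darts_def by blast
        then show ?thesis using cover XS z by blast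
      qed
      then have "Y ?z \<in> O2" using YX_face[of ?z] z XX cover YS disj
        by (metis Y_face disjoint_iff)
      then show ?thesis by simp
    qed
  qed
  show ?thesis using R m inO2[of m] orb_funpow by auto
qed

end

lemma step_change:
  fixes P :: "nat \<Rightarrow> bool"
  shows "P 0 \<Longrightarrow> \<not> P n \<Longrightarrow> \<exists>i<n. P i \<and> \<not> P (Suc i)"
proof (induction n)
  case 0 then show ?case by simp
next
  case (Suc n)
  then show ?case by (cases "P n") (auto intro: less_SucI)
qed

context jset begin

abbreviation "cd12 \<equiv> common_darts S X O1 O2"
abbreviation "cd21 \<equiv> common_darts S X O2 O1"
abbreviation "VV \<equiv> common_vertices S Y O1 O2"
abbreviation "EE \<equiv> common_adj S X Y O1 O2"

lemma cd12_props: "z \<in> cd12 \<Longrightarrow> z \<in> S \<and> z \<in> O1 \<and> X z \<in> O2 \<and> X z \<noteq> z"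
  unfolding common_darts_def by blast

lemma cd12_V: "z \<in> cd12 \<Longrightarrow> orb Y z \<in> VV"
proof -
  assume z: "z \<in> cd12"
  then have zz: "z \<in> S" "z \<in> O1" "X z \<in> O2" using cd12_props by auto
  have "X z \<notin> O1" using zz disj by blast
  then have "Y z \<notin> O1" using Y_face zz by blast
  then have "Y z \<in> O2" using cover YS zz by blast
  moreover have "Y z \<in> orb Y z" "z \<in> orb Y z" using orb_step orb_self by metis+
  ultimately show ?thesis using zz unfolding common_vertices_def y_orbits_def by blast
qed

lemma V_S: "C \<in> VV \<Longrightarrow> \<exists>w\<in>S. C = orb Y w"
  unfolding common_vertices_def y_orbits_def by blast

lemma V_sub: "C \<in> VV \<Longrightarrow> C \<subseteq> S"
  using V_S Yorb_S by blast

lemma ex12: "C \<in> VV \<Longrightarrow> \<exists>z\<in>C. z \<in> cd12"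
proof -
  assume C: "C \<in> VV"
  then obtain a b where ab: "a \<in> C" "a \<in> O1" "b \<in> C" "b \<in> O2" unfolding common_vertices_def by blast
  obtain w where w: "w \<in> S" "C = orb Y w" using V_S C by blast
  have aS: "a \<in> S" using ab O1S by blast
  have Ca: "C = orb Y a" using Yorb_eq w ab by metis
  then obtain n where n: "b = (Y ^^ n) a" using ab unfolding orb_def by blast
  have "\<not> (Y ^^ n) a \<in> O1" using n ab disj by blast
  then obtain i where i: "(Y ^^ i) a \<in> O1" "(Y ^^ Suc i) a \<notin> O1"
    using step_change[of "\<lambda>i. (Y ^^ i) a \<in> O1" n] ab by auto
  let ?z = "(Y ^^ i) a"
  have zS: "?z \<in> S" using i O1S by blast
  have "Y ?z \<notin> O1" using i by simp
  then have "X ?z \<notin> O1" using Y_face zS by blast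
  then have "X ?z \<in> O2" "X ?z \<noteq> ?z" using cover XS zS i by auto
  then have "?z \<in> cd12" using zS i unfolding common_darts_def by blast
  moreover have "?z \<in> C" using Ca orb_funpow by metis
  ultimately show ?thesis by blast
qed

lemma V_swap: "common_vertices S Y O2 O1 = VV"
  unfolding common_vertices_def by blast

lemma simple_swap: "simple_type S X Y O2 O1 = simple_type S X Y O1 O2"
  unfolding simple_type_def common_degree_def V_swap by (simp add: disj_commute)

lemma uniq12:
  assumes st: "simple_type S X Y O1 O2" and C: "C \<in> VV"
    and z: "z \<in> C" "z \<in> cd12" and z': "z' \<in> C" "z' \<in> cd12"
  shows "z = z'"
proof (rule ccontr)
  assume ne: "z \<noteq> z'"
  have C': "C \<in> common_vertices S Y O2 O1" using C V_swap by simp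
  obtain w where w: "w \<in> C" "w \<in> cd21"
    using jset.ex12[OF swap C'] by blast
  let ?T = "{u \<in> C. u \<in> cd12 \<or> u \<in> cd21}"
  have "card ?T = 2" using st C unfolding simple_type_def common_degree_def by blast
  moreover have "finite ?T"
  proof (rule finite_subset[OF _ finS])
    show "?T \<subseteq> S" using V_sub[OF C] by blast
  qed
  moreover have "{z, z', w} \<subseteq> ?T" using z z' w by blast
  moreover have "w \<noteq> z" "w \<noteq> z'" using w(2) z(2) z'(2) disj unfolding common_darts_def by auto
  ultimately have "card {z, z', w} \<le> 2" "card {z, z', w} = 3"
    using card_mono[of ?T "{z, z', w}"] ne by auto
  then show False by simp
qed

lemma uniq21:
  assumes st: "simple_type S X Y O1 O2" and C: "C \<in> VV"
    and z: "z \<in> C" "z \<in> cd21" and z': "z' \<in> C" "z' \<in> cd21"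
  shows "z = z'"
  using jset.uniq12[OF swap] st C z z' simple_swap V_swap by metis

lemma cd12_nonempty: "cd12 \<noteq> {}"
proof
  assume em: "cd12 = {}"
  have cX: "X u \<in> O1" if u: "u \<in> O1" for u
  proof (rule ccontr)
    assume "X u \<notin> O1"
    moreover have "u \<in> S" using u O1S by blast
    ultimately have "X u \<in> O2" "X u \<noteq> u" using cover XS u by auto
    then have "u \<in> cd12" using u O1S unfolding common_darts_def by blast
    then show False using em by simp
  qed
  have cY: "Y u \<in> O1" if u: "u \<in> O1" for u
    using Y_face cX u O1S by blast
  obtain u v where uv: "u \<in> O1" "v \<in> O2"
    using O1_nonempty jset.O1_nonempty[OF swap] by blast
  have "(u, v) \<in> ({(w, X w) | w. w \<in> S} \<union> {(w, Y w) | w. w \<in> S})\<^sup>*"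
    using transxy uv O1S jset.O1S[OF swap] unfolding transitive_xy_def by blast
  then have "v \<in> O1"
  proof (induction rule: rtrancl_induct)
    case base then show ?case using uv by simp
  next
    case (step y z) then show ?case using cX cY by blast
  qed
  then show False using uv disj by blast
qed

lemma card_VV: "simple_type S X Y O1 O2 \<Longrightarrow> card VV = card cd12"
proof -
  assume st: "simple_type S X Y O1 O2"
  have "bij_betw (orb Y) cd12 VV"
  proof (rule bij_betw_imageI)
    show "inj_on (orb Y) cd12"
    proof (rule inj_onI)
      fix z z' assume zz: "z \<in> cd12" "z' \<in> cd12" "orb Y z = orb Y z'"
      show "z = z'"
        by (rule uniq12[OF st cd12_V[OF zz(1)]]) (use zz orb_self in metis)+
    qed
    show "orb Y ` cd12 = VV"
    proof
      show "orb Y ` cd12 \<subseteq> VV" using cd12_V by blast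
      show "VV \<subseteq> orb Y ` cd12"
      proof
        fix C assume C: "C \<in> VV"
        then obtain z where z: "z \<in> C" "z \<in> cd12" using ex12 by blast
        obtain w where "w \<in> S" "C = orb Y w" using V_S C by blast
        then have "C = orb Y z" using Yorb_eq z by metis
        then show "C \<in> orb Y ` cd12" using z by blast
      qed
    qed
  qed
  then show ?thesis by (metis bij_betw_same_card)
qed

lemma card_EE: "card (common_edges S X O1 O2) = card cd12"
proof -
  have "common_edges S X O1 O2 = (\<lambda>u. {u, X u}) ` cd12"
    unfolding common_edges_def by blast
  moreover have "inj_on (\<lambda>u. {u, X u}) cd12"
  proof (rule inj_onI)
    fix z z' assume zz: "z \<in> cd12" "z' \<in> cd12" "{z, X z} = {z', X z'}"
    then have "z = z' \<or> (z = X z' \<and> X z = z')" by (metis doubleton_eq_iff)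
    moreover have "z \<noteq> X z'" using zz(1,2) cd12_props disj by blast
    ultimately show "z = z'" by blast
  qed
  ultimately show ?thesis by (simp add: card_image)
qed

lemma alpha0: "simple_type S X Y O1 O2 \<Longrightarrow> common_alpha S X Y O1 O2 = 0"
  unfolding common_alpha_def using card_VV card_EE by simp

end

context jset begin

abbreviation "compo \<equiv> (\<lambda>C. {C' \<in> VV. (C, C') \<in> (EE \<union> EE\<inverse>)\<^sup>*})"

lemma B_eq: "D1 \<inter> O2 = cd21" by (rule D1_O2)

lemma B_sub: "cd21 \<subseteq> S"
  unfolding common_darts_def by blast

lemma B_V: "u \<in> cd21 \<Longrightarrow> orb Y u \<in> VV"
  using jset.cd12_V[OF swap] V_swap by blast

lemma R1B: "u \<in> cd21 \<Longrightarrow> R1 u \<in> cd21 \<and> R1 u \<in> orb Y (X u)"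
  using R1_B B_eq by blast

lemma XB: "u \<in> cd21 \<Longrightarrow> X u \<in> cd12"
  unfolding common_darts_def using XS XX by auto

lemma XB': "z \<in> cd12 \<Longrightarrow> X z \<in> cd21"
  unfolding common_darts_def using XS XX by auto

lemma B_S: "u \<in> cd21 \<Longrightarrow> u \<in> S"
  unfolding common_darts_def by blast

lemma R1_orbY: "u \<in> cd21 \<Longrightarrow> orb Y (R1 u) = orb Y (X u)"
  using R1B Yorb_eq XS B_sub by blast

context
  assumes st: "simple_type S X Y O1 O2"
begin

lemma phi_inj: "inj_on (orb Y) cd21"
proof (rule inj_onI)
  fix z z' assume zz: "z \<in> cd21" "z' \<in> cd21" "orb Y z = orb Y z'"
  show "z = z'"
    by (rule uniq21[OF st B_V[OF zz(1)]]) (use zz orb_self in metis)+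
qed

lemma phi_img: "orb Y ` cd21 = VV"
proof
  show "orb Y ` cd21 \<subseteq> VV" using B_V by blast
  show "VV \<subseteq> orb Y ` cd21"
  proof
    fix C assume C: "C \<in> VV"
    then have C': "C \<in> common_vertices S Y O2 O1" using V_swap by simp
    obtain z where z: "z \<in> C" "z \<in> cd21" using jset.ex12[OF swap C'] by blast
    obtain w where "w \<in> S" "C = orb Y w" using V_S C by blast
    then have "C = orb Y z" using Yorb_eq z by metis
    then show "C \<in> orb Y ` cd21" using z by blast
  qed
qed

lemma R1_inj: "inj_on R1 cd21"
proof (rule inj_onI)
  fix w1 w2 assume w: "w1 \<in> cd21" "w2 \<in> cd21" "R1 w1 = R1 w2"
  have eq: "orb Y (X w1) = orb Y (X w2)" using R1_orbY w by metis
  have "X w1 = X w2"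
  proof (rule uniq12[OF st cd12_V[OF XB[OF w(1)]]])
    show "X w1 \<in> orb Y (X w1)" by (rule orb_self)
    show "X w2 \<in> orb Y (X w1)" using eq orb_self by metis
    show "X w1 \<in> cd12" "X w2 \<in> cd12" using XB w by auto
  qed
  then show "w1 = w2" using XX w B_sub by (metis subsetD)
qed

lemma R1_per: "u \<in> cd21 \<Longrightarrow> \<exists>n>0. (R1 ^^ n) u = u"
proof -
  assume u: "u \<in> cd21"
  have fin: "finite cd21" using B_sub finS by (rule finite_subset)
  show ?thesis by (rule periodic_of_inj[OF fin _ R1_inj u]) (use R1B in blast)
qed

lemma orbR1_sub: "u \<in> cd21 \<Longrightarrow> orb R1 u \<subseteq> cd21"
  using orb_subset[of cd21 R1 u] R1B by blast

lemma orbR1_sym: "u \<in> cd21 \<Longrightarrow> v \<in> orb R1 u \<Longrightarrow> u \<in> orb R1 v"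
proof -
  assume u: "u \<in> cd21" and v: "v \<in> orb R1 u"
  obtain n where "0 < n" "(R1 ^^ n) u = u" using R1_per u by blast
  then have "orb R1 v = orb R1 u" using orb_eq_periodic v by metis
  then show ?thesis using orb_self by metis
qed

lemma key: "u \<in> cd21 \<Longrightarrow> orb Y ` orb R1 u = compo (orb Y u)"
proof
  assume u: "u \<in> cd21"
  show "orb Y ` orb R1 u \<subseteq> compo (orb Y u)"
  proof
    fix C assume "C \<in> orb Y ` orb R1 u"
    then obtain v where v: "v \<in> orb R1 u" "C = orb Y v" by blast
    have "v \<in> cd21 \<and> (orb Y u, orb Y v) \<in> (EE \<union> EE\<inverse>)\<^sup>*"
    proof (rule orb_induct[OF v(1)])
      show "u \<in> cd21 \<and> (orb Y u, orb Y u) \<in> (EE \<union> EE\<inverse>)\<^sup>*" using u by simp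
      fix w assume w: "w \<in> cd21 \<and> (orb Y u, orb Y w) \<in> (EE \<union> EE\<inverse>)\<^sup>*"
      have "(orb Y (X w), orb Y (X (X w))) \<in> EE"
        unfolding common_adj_def using XB w by blast
      moreover have "orb Y (R1 w) = orb Y (X w)" using R1_orbY w by blast
      moreover have "X (X w) = w" using XX B_S w by blast
      ultimately have "(orb Y (R1 w), orb Y w) \<in> EE" by simp
      then have "(orb Y w, orb Y (R1 w)) \<in> EE \<union> EE\<inverse>" by blast
      then have "(orb Y u, orb Y (R1 w)) \<in> (EE \<union> EE\<inverse>)\<^sup>*"
        using w by (metis rtrancl_into_rtrancl)
      then show "R1 w \<in> cd21 \<and> (orb Y u, orb Y (R1 w)) \<in> (EE \<union> EE\<inverse>)\<^sup>*"
        using w R1B by blast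
    qed
    then show "C \<in> compo (orb Y u)" using v B_V by blast
  qed
  show "compo (orb Y u) \<subseteq> orb Y ` orb R1 u"
  proof
    fix C' assume "C' \<in> compo (orb Y u)"
    then have "(orb Y u, C') \<in> (EE \<union> EE\<inverse>)\<^sup>*" by blast
    then show "C' \<in> orb Y ` orb R1 u"
    proof (induction rule: rtrancl_induct)
      case base
      have "u \<in> orb R1 u" by (rule orb_self)
      then show ?case by blast
    next
      case (step C C')
      from step.IH obtain w where w: "w \<in> orb R1 u" "C = orb Y w" by (rule imageE) simp
      have wB: "w \<in> cd21" using w(1) orbR1_sub[OF u] by (rule subsetD[rotated])
      from step.hyps(2) show ?case
      proof
        assume "(C, C') \<in> EE"
        then obtain z where z: "z \<in> cd12" "C = orb Y z" "C' = orb Y (X z)"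
          unfolding common_adj_def by blast
        have Xz: "X z \<in> cd21" by (rule XB'[OF z(1)])
        have XXz: "X (X z) = z" using XX cd12_props[OF z(1)] by blast
        have R1z: "R1 (X z) \<in> cd21" using R1B[OF Xz] by (rule conjunct1)
        have "orb Y (R1 (X z)) = orb Y (X (X z))" by (rule R1_orbY[OF Xz])
        also have "\<dots> = orb Y w" using XXz z(2) w(2) by simp
        finally have "R1 (X z) = w" by (rule inj_onD[OF phi_inj _ R1z wB])
        moreover have "X z \<in> orb R1 (R1 (X z))"
          by (rule orbR1_sym[OF Xz orb_step[OF orb_self]])
        ultimately have "X z \<in> orb R1 w" by simp
        then have "X z \<in> orb R1 u" using orb_sub_of_mem[OF w(1)] by (rule subsetD[rotated])
        then show ?thesis using z(3) by (intro rev_image_eqI)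
      next
        assume "(C, C') \<in> EE\<inverse>"
        then have "(C', C) \<in> EE" by simp
        then obtain z where z: "z \<in> cd12" "C' = orb Y z" "C = orb Y (X z)"
          unfolding common_adj_def by blast
        have Xz: "X z \<in> cd21" by (rule XB'[OF z(1)])
        have "orb Y (X z) = orb Y w" using w(2) z(3) by simp
        then have Xzw: "X z = w" by (rule inj_onD[OF phi_inj _ Xz wB])
        have XXz: "X (X z) = z" using XX cd12_props[OF z(1)] by blast
        have "orb Y (R1 w) = orb Y (X w)" by (rule R1_orbY[OF wB])
        also have "\<dots> = C'" using Xzw XXz z(2) by simp
        finally have "orb Y (R1 w) = C'" .
        moreover have "R1 w \<in> orb R1 u" by (rule orb_step[OF w(1)])
        ultimately show ?thesis by blast
      qed
    qed
  qed
qed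

lemma card_B_orbits: "card (orb R1 ` cd21) = common_components S X Y O1 O2"
proof -
  have "card (orb R1 ` cd21) = card ((\<lambda>Q. orb Y ` Q) ` (orb R1 ` cd21))"
  proof (rule card_image[symmetric])
    show "inj_on (\<lambda>Q. orb Y ` Q) (orb R1 ` cd21)"
    proof (rule inj_onI)
      fix A B assume AB: "A \<in> orb R1 ` cd21" "B \<in> orb R1 ` cd21" "orb Y ` A = orb Y ` B"
      have "A \<subseteq> cd21" "B \<subseteq> cd21" using AB orbR1_sub by blast+
      then show "A = B" using inj_on_image_eq_iff[OF phi_inj] AB(3) by blast
    qed
  qed
  also have "(\<lambda>Q. orb Y ` Q) ` (orb R1 ` cd21) = compo ` (orb Y ` cd21)"
    using key by (auto simp: image_image)
  also have "\<dots> = compo ` VV" using phi_img by simp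
  finally show ?thesis unfolding common_components_def by simp
qed

lemma boundary_eq: "nbhd_boundary S X Y O1 = int (common_components S X Y O1 O2)"
proof -
  have D0: "D1 = (D1 \<inter> O1) \<union> (D1 \<inter> O2)" using D1_S SU by blast
  have D: "D1 = (D1 \<inter> O1) \<union> cd21" using D0 B_eq by simp
  obtain z where z: "z \<in> cd12" using cd12_nonempty by blast
  have zp: "z \<in> S" "z \<in> O1" "X z \<noteq> z" using cd12_props[OF z] by auto
  have zA: "z \<in> D1 \<inter> O1" using zp D1_O1 by blast
  have allA: "\<And>v. v \<in> D1 \<inter> O1 \<Longrightarrow> orb R1 v = D1 \<inter> O1" by (rule A_orb)
  have A1: "orb R1 ` (D1 \<inter> O1) = {D1 \<inter> O1}"
  proof
    show "orb R1 ` (D1 \<inter> O1) \<subseteq> {D1 \<inter> O1}" using allA by blast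
    show "{D1 \<inter> O1} \<subseteq> orb R1 ` (D1 \<inter> O1)" using allA[OF zA] zA by (metis empty_subsetI image_eqI insert_subset)
  qed
  have notin: "D1 \<inter> O1 \<notin> orb R1 ` cd21"
  proof
    assume "D1 \<inter> O1 \<in> orb R1 ` cd21"
    then obtain u where u: "u \<in> cd21" "D1 \<inter> O1 = orb R1 u" by (rule imageE) simp
    then have "z \<in> orb R1 u" using zA by simp
    then have "z \<in> cd21" using orbR1_sub[OF u(1)] by (rule subsetD[rotated])
    then have "z \<in> O2" unfolding common_darts_def by simp
    then show False using zp(2) disj by blast
  qed
  have fin: "finite (orb R1 ` cd21)"
  proof -
    have "finite cd21" using B_sub finS by (rule finite_subset)
    then show ?thesis by simp
  qed
  have e1: "orb R1 ` D1 = orb R1 ` ((D1 \<inter> O1) \<union> cd21)" using D by (rule arg_cong)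
  have e2: "orb R1 ` ((D1 \<inter> O1) \<union> cd21) = insert (D1 \<inter> O1) (orb R1 ` cd21)"
    unfolding image_Un A1 by simp
  have e3: "card (insert (D1 \<inter> O1) (orb R1 ` cd21)) = Suc (card (orb R1 ` cd21))"
    by (rule card_insert_disjoint[OF fin notin])
  have "card (orb R1 ` D1) = Suc (common_components S X Y O1 O2)"
    unfolding e1 e2 e3 card_B_orbits ..
  then show ?thesis unfolding nbhd_boundary_def by simp
qed

end

lemma comp_swap: "common_components S X Y O2 O1 = common_components S X Y O1 O2"
proof -
  have "common_adj S X Y O2 O1 = EE\<inverse>"
  proof
    show "common_adj S X Y O2 O1 \<subseteq> EE\<inverse>"
    proof
      fix p assume "p \<in> common_adj S X Y O2 O1"
      then obtain u where u: "u \<in> cd21" "p = (orb Y u, orb Y (X u))" unfolding common_adj_def by blast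
      have XXu: "X (X u) = u" using XX B_S[OF u(1)] by blast
      have "(orb Y (X u), orb Y (X (X u))) \<in> EE" unfolding common_adj_def using XB[OF u(1)] by blast
      then show "p \<in> EE\<inverse>" using u(2) XXu by simp
    qed
    show "EE\<inverse> \<subseteq> common_adj S X Y O2 O1"
    proof
      fix p assume "p \<in> EE\<inverse>"
      then obtain z where z: "z \<in> cd12" "p = (orb Y (X z), orb Y z)" unfolding common_adj_def by blast
      have XXz: "X (X z) = z" using XX cd12_props[OF z(1)] by blast
      have "(orb Y (X z), orb Y (X (X z))) \<in> common_adj S X Y O2 O1"
        unfolding common_adj_def using XB'[OF z(1)] by blast
      then show "p \<in> common_adj S X Y O2 O1" using z(2) XXz by simp
    qed
  qed
  then have eqA: "common_adj S X Y O2 O1 \<union> (common_adj S X Y O2 O1)\<inverse> = EE \<union> EE\<inverse>"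
    by (simp add: Un_commute)
  show ?thesis unfolding common_components_def V_swap eqA ..
qed

end

context jset begin

lemma clv_img: "cl_vertices S Y F = orb Y ` {u \<in> S. u \<in> F}"
  unfolding cl_vertices_def by blast

lemma cle_img: "cl_edges S X F = (\<lambda>u. {u, X u}) ` cl_darts S X F"
  unfolding cl_edges_def by blast

lemma v_un: "cl_vertices S Y O1 \<union> cl_vertices S Y O2 = y_orbits S Y"
proof
  show "cl_vertices S Y O1 \<union> cl_vertices S Y O2 \<subseteq> y_orbits S Y"
    unfolding clv_img y_orbits_def by blast
  show "y_orbits S Y \<subseteq> cl_vertices S Y O1 \<union> cl_vertices S Y O2"
  proof
    fix C assume "C \<in> y_orbits S Y"
    then obtain x where x: "x \<in> S" "C = orb Y x" unfolding y_orbits_def by blast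
    show "C \<in> cl_vertices S Y O1 \<union> cl_vertices S Y O2"
      using cover[OF x(1)] x unfolding clv_img by blast
  qed
qed

lemma v_int: "cl_vertices S Y O1 \<inter> cl_vertices S Y O2 = VV"
proof
  show "cl_vertices S Y O1 \<inter> cl_vertices S Y O2 \<subseteq> VV"
  proof
    fix C assume "C \<in> cl_vertices S Y O1 \<inter> cl_vertices S Y O2"
    then obtain a b where ab: "a \<in> S" "a \<in> O1" "C = orb Y a" "b \<in> S" "b \<in> O2" "C = orb Y b"
      unfolding clv_img by auto
    have "a \<in> C" "b \<in> C" using ab orb_self by metis+
    moreover have "C \<in> y_orbits S Y" unfolding y_orbits_def using ab by blast
    ultimately show "C \<in> VV" unfolding common_vertices_def using ab by blast
  qed
  show "VV \<subseteq> cl_vertices S Y O1 \<inter> cl_vertices S Y O2"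
  proof
    fix C assume C: "C \<in> VV"
    then obtain a b where ab: "a \<in> C" "a \<in> O1" "b \<in> C" "b \<in> O2" unfolding common_vertices_def by blast
    obtain w where w: "w \<in> S" "C = orb Y w" using V_S C by blast
    have "orb Y a = C" "orb Y b = C" using Yorb_eq w ab by metis+
    moreover have "a \<in> S" "b \<in> S" using ab O1S jset.O1S[OF swap] by blast+
    ultimately show "C \<in> cl_vertices S Y O1 \<inter> cl_vertices S Y O2"
      unfolding clv_img using ab by blast
  qed
qed

lemma e_un: "cl_edges S X O1 \<union> cl_edges S X O2 = x_edges S X"
  unfolding cl_edges_def x_edges_def cl_darts_def using cover by blast

lemma e_int: "cl_edges S X O1 \<inter> cl_edges S X O2 = common_edges S X O1 O2"
proof
  show "cl_edges S X O1 \<inter> cl_edges S X O2 \<subseteq> common_edges S X O1 O2"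
  proof
    fix e assume e: "e \<in> cl_edges S X O1 \<inter> cl_edges S X O2"
    then obtain u where u: "u \<in> cl_darts S X O1" "e = {u, X u}" unfolding cle_img by blast
    obtain v where v: "v \<in> cl_darts S X O2" "e = {v, X v}" using e unfolding cle_img by blast
    have uS: "u \<in> S" "X u \<in> S" "X u \<noteq> u" using u(1) XS unfolding cl_darts_def by auto
    have "e \<inter> O1 \<noteq> {}" using u unfolding cl_darts_def by blast
    moreover have "e \<inter> O2 \<noteq> {}" using v unfolding cl_darts_def by blast
    ultimately have "(u \<in> O1 \<and> X u \<in> O2) \<or> (X u \<in> O1 \<and> u \<in> O2)"
      using u(2) disj cover uS by blast
    then show "e \<in> common_edges S X O1 O2"
    proof
      assume h: "u \<in> O1 \<and> X u \<in> O2"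
      then have "u \<in> cd12" unfolding common_darts_def using uS by blast
      then show ?thesis unfolding common_edges_def using u(2) by blast
    next
      assume h: "X u \<in> O1 \<and> u \<in> O2"
      have XXu: "X (X u) = u" using XX uS by blast
      then have "X u \<in> cd12" unfolding common_darts_def using uS h by auto
      moreover have "e = {X u, X (X u)}" using u(2) XXu by auto
      ultimately show ?thesis unfolding common_edges_def by blast
    qed
  qed
  show "common_edges S X O1 O2 \<subseteq> cl_edges S X O1 \<inter> cl_edges S X O2"
  proof
    fix e assume "e \<in> common_edges S X O1 O2"
    then obtain z where z: "z \<in> cd12" "e = {z, X z}" unfolding common_edges_def by blast
    have "z \<in> cl_darts S X O1" "z \<in> cl_darts S X O2"
      using cd12_props[OF z(1)] unfolding cl_darts_def by auto
    then show "e \<in> cl_edges S X O1 \<inter> cl_edges S X O2" unfolding cle_img using z(2) by blast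
  qed
qed

lemma card_v: "card (cl_vertices S Y O1) + card (cl_vertices S Y O2) = card (y_orbits S Y) + card VV"
proof -
  have f1: "finite (cl_vertices S Y O1)" "finite (cl_vertices S Y O2)"
    unfolding clv_img using finS by simp_all
  show ?thesis using card_Un_Int[OF f1] unfolding v_un v_int .
qed

lemma card_e: "card (cl_edges S X O1) + card (cl_edges S X O2) = card (x_edges S X) + card (common_edges S X O1 O2)"
proof -
  have fd: "finite (cl_darts S X F)" for F
  proof (rule finite_subset[OF _ finS])
    show "cl_darts S X F \<subseteq> S" unfolding cl_darts_def by blast
  qed
  have f1: "finite (cl_edges S X O1)" "finite (cl_edges S X O2)"
    unfolding cle_img using fd by simp_all
  show ?thesis using card_Un_Int[OF f1] unfolding e_un e_int .
qed

lemma general: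
  "nbhd_genus S X Y O1 + nbhd_genus S X Y O2
     + (real_of_int (nbhd_boundary S X Y O1) + real_of_int (nbhd_boundary S X Y O2)
        + real_of_int (common_alpha S X Y O1 O2)) / 2
   = diagram_genus S X Y + 1"
proof -
  have cv: "real (card (cl_vertices S Y O1)) + real (card (cl_vertices S Y O2)) = real (card (y_orbits S Y)) + real (card VV)"
    using card_v by (metis of_nat_add)
  have ce: "real (card (cl_edges S X O1)) + real (card (cl_edges S X O2)) = real (card (x_edges S X)) + real (card (common_edges S X O1 O2))"
    using card_e by (metis of_nat_add)
  show ?thesis
    unfolding nbhd_genus_def nbhd_euler_def common_alpha_def diagram_genus_def card2
    using cv ce by (simp add: field_simps)
qed

lemma simple:
  assumes st: "simple_type S X Y O1 O2"
  shows "nbhd_genus S X Y O1 + nbhd_genus S X Y O2 + real (common_components S X Y O1 O2)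
          = diagram_genus S X Y + 1"
proof -
  have st': "simple_type S X Y O2 O1" using st simple_swap by simp
  have b1: "nbhd_boundary S X Y O1 = int (common_components S X Y O1 O2)"
    by (rule boundary_eq[OF st])
  have b2: "nbhd_boundary S X Y O2 = int (common_components S X Y O1 O2)"
    using jset.boundary_eq[OF swap st'] comp_swap by simp
  have a0: "common_alpha S X Y O1 O2 = 0" by (rule alpha0[OF st])
  show ?thesis using general unfolding b1 b2 a0 by simp
qed

end

theorem proposition1:
  fixes k p :: nat and a b c d e f \<theta> :: int and O1 O2 :: "nat set"
  defines "l \<equiv> (p + 1) div 2"
    and "S \<equiv> PL p" and "X \<equiv> Xmap p a c d" and "Y \<equiv> Ymap p b d e f"
    and "nabla \<equiv> - (a ^ 2 + d * c ^ 2)"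
    and "r \<equiv> a * (2 * e - b) + 2 * d * c * f"
  assumes k: "k \<ge> 2"
    and p: "prime p"
    and nabla_nz: "\<not> [nabla = 0] (mod int p)"
    and detY: "[1 + d * f ^ 2 + e ^ 2 - e * b = 0] (mod int p)"
    and theta_r: "[\<theta> * nabla = r ^ 2] (mod int p)"
    and theta_root: "[fpoly l \<theta> = 0] (mod int p)"
    and theta_prim: "\<forall>s. s dvd l \<and> s > 1 \<longrightarrow> \<not> [fpoly (l div s) \<theta> = 0] (mod int p)"
    and Yk: "\<forall>z\<in>S. (Y ^^ k) z = z"
    and jan: "januarial S X Y"
    and O1: "O1 \<in> xy_orbits S X Y" and O2: "O2 \<in> xy_orbits S X Y" and O12: "O1 \<noteq> O2"
  shows
    "(simple_type S X Y O1 O2 \<longrightarrow>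
        nbhd_genus S X Y O1 + nbhd_genus S X Y O2 + real (common_components S X Y O1 O2)
          = diagram_genus S X Y + 1)
     \<and>
     (\<not> simple_type S X Y O1 O2 \<longrightarrow>
        nbhd_genus S X Y O1 + nbhd_genus S X Y O2
          + (real_of_int (nbhd_boundary S X Y O1) + real_of_int (nbhd_boundary S X Y O2)
             + real_of_int (common_alpha S X Y O1 O2)) / 2
          = diagram_genus S X Y + 1)"
proof -
  have J: "jset S X Y k O1 O2"
  proof (unfold_locales)
    show "finite S" unfolding S_def PL_def by simp
    have bX: "bij_betw X S S" and bY: "bij_betw Y S S" using jan unfolding januarial_def by blast+
    show "\<And>u. u \<in> S \<Longrightarrow> X u \<in> S" using bij_betw_apply[OF bX] by blast
    show "\<And>u. u \<in> S \<Longrightarrow> X (X u) = u" using jan unfolding januarial_def by blast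
    show "\<And>u. u \<in> S \<Longrightarrow> Y u \<in> S" using bij_betw_apply[OF bY] by blast
    show "inj_on Y S" using bY by (rule bij_betw_imp_inj_on)
    show "0 < k" using k by simp
    show "\<And>u. u \<in> S \<Longrightarrow> (Y ^^ k) u = u" using Yk by blast
    show "O1 \<in> xy_orbits S X Y" by (rule O1)
    show "O2 \<in> xy_orbits S X Y" by (rule O2)
    show "O1 \<noteq> O2" by (rule O12)
    show "card (xy_orbits S X Y) = 2" using jan unfolding januarial_def by blast
    show "transitive_xy S X Y" using jan unfolding januarial_def by blast
  qed
  show ?thesis using jset.simple[OF J] jset.general[OF J] by blast
qed

end
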